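(* In every state $\mathbf{x}$ of the common-chunk-protocol Markov process (with $k\ge 2$ chunks and any arrival rate $\lambda>0$), the total download rate satisfies \[ r \;\ge\; \frac{S\, r_0^2}{6k^2}, \qquad\text{where } r_0=\sum_{i=1}^k dS_i^+ . \]
   Context: Model: Fix an integer $k\ge 2$ (number of chunks of a file) and $\lambda>0$. There is always exactly one seed holding all $k$ chunks. Non-seed peers arrive according to a Poisson process of rate $\lambda$, each arriving with no chunks; each non-seed peer holds a subset (its profile) of $\{1,\dots,k\}$ and leaves the system immediately once it holds all $k$ chunks. The state $\mathbf{x}$ of the continuous-time Markov process is the number of non-seed peers with each profile. $S$ denotes the total number of peers present, including the seed. Each non-seed peer has an independent rate-1 Poisson clock; at each tick it draws a sample of peers independently and uniformly at random with replacement from the current $S$ peers (seed and itself included) and may instantaneously download at most one chunk that it lacks and that is held by some sampled peer (such a chunk is a "match"). Counting draws with multiplicity, a chunk is "rare" in a sample of 3 draws if exactly one of the 3 draws holds it. Common chunk protocol: (i) a peer with no chunks draws 3 peers and downloads a chunk chosen uniformly among the rare matches, if there is any, otherwise nothing; (ii) a peer holding at least 1 and at most $k-2$ chunks draws 1 peer and downloads a uniformly chosen match, if any, otherwise nothing; (iii) a peer holding exactly $k-1$ chunks draws 3 peers and downloads its missing chunk only if that chunk is held by some draw and every chunk it holds is held by at least 2 of the 3 draws; otherwise nothing. Notation: $S_i$ ($1\le i\le k$) is the number of peers, including the seed, holding chunk $i$; $S_0$ is the number of peers holding no chunks; $\bar S_i=S-S_i$; $\bar T_i$ is the number of peers whose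 profile is exactly $\{1,\dots,k\}\setminus\{i\}$. $r=r(\mathbf{x})$ is the total rate of download events in state $\mathbf{x}$, i.e. the sum over all non-seed peers of the probability that a clock tick of that peer results in a download. $dS_i^+=dS_i^+(\mathbf{x})$ is the probability that a clock tick of a peer holding no chunks results in that peer downloading chunk $i$. *)

theory Defs
  imports Complex_Main
begin

text \<open>Chunks are 1..k. A state x assigns to each
profile the number of non-seed peers with that profile (only proper subsets of {1..k}
may occur, since peers leave once complete). The seed holds all of {1..k}.\<close>

definition profiles :: "nat \<Rightarrow> nat set set" where
  "profiles k = Pow {1..k}"

definition nonseed_profiles :: "nat \<Rightarrow> nat set set" where
  "nonseed_profiles k = Pow {1..k} - {{1..k}}"

text \<open>S: total number of peers, including the seed.\<close>
definition num_peers :: "nat \<Rightarrow> (nat set \<Rightarrow> nat) \<Rightarrow> nat" where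
  "num_peers k x = 1 + (\<Sum>P\<in>nonseed_profiles k. x P)"

text \<open>Probability that one uniform draw (from all S peers, seed and the drawing
peer included) has profile A.\<close>
definition draw_prob :: "nat \<Rightarrow> (nat set \<Rightarrow> nat) \<Rightarrow> nat set \<Rightarrow> real" where
  "draw_prob k x A =
     (real (x A) + (if A = {1..k} then 1 else 0)) / real (num_peers k x)"

definition hold_count :: "nat set list \<Rightarrow> nat \<Rightarrow> nat" where
  "hold_count As i = length (filter (\<lambda>A. i \<in> A) As)"

definition rare :: "nat \<Rightarrow> nat set list \<Rightarrow> nat set" where
  "rare k As = {i \<in> {1..k}. hold_count As i = 1}"

definition exp3 :: "nat \<Rightarrow> (nat set \<Rightarrow> nat) \<Rightarrow> (nat set list \<Rightarrow> real) \<Rightarrow> real" where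
  "exp3 k x f = (\<Sum>A1\<in>profiles k. \<Sum>A2\<in>profiles k. \<Sum>A3\<in>profiles k.
       draw_prob k x A1 * draw_prob k x A2 * draw_prob k x A3 * f [A1, A2, A3])"

text \<open>dS_i^+: probability that a tick of a peer holding no chunks results in that
peer downloading chunk i (uniform choice among rare matches).\<close>
definition dS_plus :: "nat \<Rightarrow> (nat set \<Rightarrow> nat) \<Rightarrow> nat \<Rightarrow> real" where
  "dS_plus k x i = exp3 k x (\<lambda>As.
      if i \<in> rare k As then 1 / real (card (rare k As)) else 0)"

text \<open>Probability that a clock tick of a peer with profile P results in a download,
under the common chunk protocol.\<close>
definition download_prob :: "nat \<Rightarrow> (nat set \<Rightarrow> nat) \<Rightarrow> nat set \<Rightarrow> real" where
  "download_prob k x P =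
    (if P = {} then
       exp3 k x (\<lambda>As. if rare k As \<noteq> {} then 1 else 0)
     else if card P \<le> k - 2 then
       (\<Sum>A\<in>profiles k. draw_prob k x A * (if A - P \<noteq> {} then 1 else 0))
     else if card P = k - 1 then
       exp3 k x (\<lambda>As.
         if (\<forall>m\<in>{1..k} - P. hold_count As m \<ge> 1) \<and> (\<forall>i\<in>P. hold_count As i \<ge> 2)
         then 1 else 0)
     else 0)"

definition total_rate :: "nat \<Rightarrow> (nat set \<Rightarrow> nat) \<Rightarrow> real" where
  "total_rate k x = (\<Sum>P\<in>nonseed_profiles k. real (x P) * download_prob k x P)"

end

theory Submission
  imports Defs
begin


lemma cs_card:
  fixes y :: "'a \<Rightarrow> real"
  shows "(\<Sum>i\<in>I. y i)^2 \<le> real (card I) * (\<Sum>i\<in>I. (y i)^2)"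
proof -
  have inner: "(\<Sum>j\<in>I. (y i - y j)^2) = real (card I) * (y i)^2 + (\<Sum>j\<in>I. (y j)^2) - 2 * (y i * (\<Sum>j\<in>I. y j))" for i
  proof -
    have "(\<Sum>j\<in>I. (y i - y j)^2) = (\<Sum>j\<in>I. (y i)^2 + ((y j)^2 - 2 * (y i * y j)))"
      by (intro sum.cong refl) (simp add: power2_diff)
    also have "\<dots> = (\<Sum>j\<in>I. (y i)^2) + ((\<Sum>j\<in>I. (y j)^2) - 2 * (\<Sum>j\<in>I. y i * y j))"
      by (simp only: sum.distrib sum_subtractf sum_distrib_left)
    also have "\<dots> = real (card I) * (y i)^2 + (\<Sum>j\<in>I. (y j)^2) - 2 * (y i * (\<Sum>j\<in>I. y j))"
      by (simp only: sum_constant sum_distrib_left[symmetric])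
    finally show ?thesis .
  qed
  have "0 \<le> (\<Sum>i\<in>I. \<Sum>j\<in>I. (y i - y j)^2)" by (intro sum_nonneg) auto
  also have "\<dots> = (\<Sum>i\<in>I. real (card I) * (y i)^2 + (\<Sum>j\<in>I. (y j)^2) - 2 * (y i * (\<Sum>j\<in>I. y j)))"
    by (simp only: inner)
  also have "\<dots> = real (card I) * (\<Sum>i\<in>I. (y i)^2) + real (card I) * (\<Sum>j\<in>I. (y j)^2) - 2 * ((\<Sum>i\<in>I. y i) * (\<Sum>j\<in>I. y j))"
    by (simp only: sum.distrib sum_subtractf sum_distrib_left[symmetric] sum_distrib_right[symmetric] sum_constant)
  finally show ?thesis by (simp add: power2_eq_square)
qed

lemma p_nonneg: "draw_prob k x A \<ge> 0"
  unfolding draw_prob_def by simp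

lemma S_pos: "num_peers k x > 0"
  unfolding num_peers_def by simp

lemma fin_F: "finite (profiles k)" unfolding profiles_def by simp

lemma sum_p:
  assumes "\<forall>P. x P \<noteq> 0 \<longrightarrow> P \<in> nonseed_profiles k"
  shows "(\<Sum>A\<in>profiles k. draw_prob k x A) = 1"
proof -
  have full: "{1..k} \<in> profiles k" unfolding profiles_def by simp
  have x0: "x {1..k} = 0" using assms unfolding nonseed_profiles_def by auto
  have ns: "nonseed_profiles k = profiles k - {{1..k}}"
    unfolding nonseed_profiles_def profiles_def by simp
  have "(\<Sum>A\<in>profiles k. real (x A) + (if A = {1..k} then 1 else 0))
        = (\<Sum>A\<in>profiles k. real (x A)) + 1"
    using full fin_F by (simp add: sum.distrib)
  also have "(\<Sum>A\<in>profiles k. real (x A)) = (\<Sum>A\<in>nonseed_profiles k. real (x A))"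
    unfolding ns using full fin_F x0 by (simp add: sum_diff1)
  finally have "(\<Sum>A\<in>profiles k. real (x A) + (if A = {1..k} then 1 else 0)) = real (num_peers k x)"
    unfolding num_peers_def by simp
  then show ?thesis unfolding draw_prob_def using S_pos[of k x]
    by (simp add: sum_divide_distrib[symmetric])
qed

lemma exp3_mono:
  assumes "\<And>A1 A2 A3. A1\<in>profiles k \<Longrightarrow> A2\<in>profiles k \<Longrightarrow> A3\<in>profiles k \<Longrightarrow> f [A1,A2,A3] \<le> g [A1,A2,A3]"
  shows "exp3 k x f \<le> exp3 k x g"
  unfolding exp3_def
  by (intro sum_mono mult_left_mono assms) (auto intro: mult_nonneg_nonneg p_nonneg)

lemma exp3_add: "exp3 k x (\<lambda>As. f As + g As) = exp3 k x f + exp3 k x g"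
  unfolding exp3_def by (simp add: distrib_left sum.distrib)

lemma exp3_sum: "exp3 k x (\<lambda>As. \<Sum>i\<in>I. f i As) = (\<Sum>i\<in>I. exp3 k x (f i))"
proof (cases "finite I")
  case True then show ?thesis
    by (induction I rule: finite_induct) (simp_all add: exp3_add, simp add: exp3_def)
next
  case False then show ?thesis by (simp add: exp3_def)
qed

lemma exp3_sep: "exp3 k x (\<lambda>As. f (As!0) * g (As!1) * h (As!2)) =
   (\<Sum>A\<in>profiles k. draw_prob k x A * f A) * (\<Sum>A\<in>profiles k. draw_prob k x A * g A)
   * (\<Sum>A\<in>profiles k. draw_prob k x A * h A)"
proof -
  let ?p = "draw_prob k x"
  have "exp3 k x (\<lambda>As. f (As!0) * g (As!1) * h (As!2)) = (\<Sum>A1\<in>profiles k. \<Sum>A2\<in>profiles k. \<Sum>A3\<in>profiles k.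
      (?p A1 * f A1) * ((?p A2 * g A2) * (?p A3 * h A3)))"
    unfolding exp3_def by (intro sum.cong refl) (simp add: mult_ac)
  also have "\<dots> = (\<Sum>A1\<in>profiles k. (?p A1 * f A1) * (\<Sum>A2\<in>profiles k. \<Sum>A3\<in>profiles k. (?p A2 * g A2) * (?p A3 * h A3)))"
    by (simp add: sum_distrib_left)
  also have "\<dots> = (\<Sum>A1\<in>profiles k. (?p A1 * f A1) * ((\<Sum>A2\<in>profiles k. ?p A2 * g A2) * (\<Sum>A3\<in>profiles k. ?p A3 * h A3)))"
    by (simp only: sum_product)
  also have "\<dots> = (\<Sum>A\<in>profiles k. ?p A * f A) * (\<Sum>A\<in>profiles k. ?p A * g A) * (\<Sum>A\<in>profiles k. ?p A * h A)"
    by (simp only: sum_distrib_right mult.assoc)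
  finally show ?thesis .
qed


lemma exp3_cong:
  assumes "\<And>A1 A2 A3. f [A1,A2,A3] = g [A1,A2,A3]"
  shows "exp3 k x f = exp3 k x g"
  unfolding exp3_def using assms by simp

lemma exp3_nonneg:
  assumes "\<And>A1 A2 A3. f [A1,A2,A3] \<ge> 0"
  shows "exp3 k x f \<ge> 0"
  unfolding exp3_def using assms by (intro sum_nonneg) (auto intro!: mult_nonneg_nonneg p_nonneg)

lemma d_nonneg: "download_prob k x P \<ge> 0"
  unfolding download_prob_def
  by (auto intro!: exp3_nonneg sum_nonneg mult_nonneg_nonneg p_nonneg split: if_splits)

lemma exp3_one:
  assumes "\<forall>P. x P \<noteq> 0 \<longrightarrow> P \<in> nonseed_profiles k"
  shows "exp3 k x (\<lambda>As. 1) = 1"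
  using exp3_sep[of k x "\<lambda>_. 1" "\<lambda>_. 1" "\<lambda>_. 1"] sum_p[OF assms] by simp

lemma final_arith:
  fixes q z LM LT W kk :: real
  assumes "kk \<ge> 2" "0 \<le> q" "q \<le> 1" "z \<ge> 0" "LM \<ge> 0" "LT \<ge> 0" "W^2 \<le> kk * LT"
    "q \<le> 6*kk*z + 6*kk*LM + 3*W"
  shows "q^2 / (6 * kk^2) \<le> z*q + LM + LT"
proof -
  have "q^2 \<le> q * (6*kk*z + 6*kk*LM + 3*W)"
    using assms(2,8) by (simp add: power2_eq_square mult_left_mono)
  also have "\<dots> = 6*kk*(z*q) + 6*kk*(q*LM) + 3*q*W" by (simp add: algebra_simps)
  finally have h1: "q^2 \<le> 6*kk*(z*q) + 6*kk*(q*LM) + 3*q*W" .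
  have h2: "6*kk*(q*LM) \<le> 6*kk*LM"
    using assms by (simp add: mult_left_le_one_le)
  have "0 \<le> (q - 3*W)^2" by simp
  then have h3: "3*q*W \<le> q^2/2 + 9*W^2/2" by (simp add: power2_eq_square algebra_simps)
  have h4: "9*W^2/2 \<le> 9*kk*LT/2" using assms(7) by simp
  have "q^2 \<le> 12*kk*(z*q) + 12*kk*LM + 9*kk*LT" using h1 h2 h3 h4 by linarith
  also have "\<dots> \<le> 12*kk*(z*q + LM + LT)"
    using assms by (simp add: algebra_simps)
  finally have h5: "q^2 \<le> 12*kk*(z*q + LM + LT)" .
  have pos: "0 \<le> z*q + LM + LT" using assms by simp
  have "12*kk*(z*q + LM + LT) \<le> 6*kk^2*(z*q + LM + LT)"
    using assms(1) pos by (intro mult_right_mono) (auto simp: power2_eq_square)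
  with h5 have "q^2 \<le> 6*kk^2*(z*q + LM + LT)" by linarith
  then show ?thesis using assms(1) by (simp add: divide_le_eq mult.commute)
qed


definition aa :: "nat \<Rightarrow> (nat set \<Rightarrow> nat) \<Rightarrow> nat \<Rightarrow> real" where
  "aa k x i = (\<Sum>A\<in>profiles k. draw_prob k x A * (if i \<in> A then 1 else 0))"
definition bb :: "nat \<Rightarrow> (nat set \<Rightarrow> nat) \<Rightarrow> nat \<Rightarrow> real" where
  "bb k x i = (\<Sum>A\<in>profiles k. draw_prob k x A * (if i \<notin> A then 1 else 0))"

lemma hc3: "hold_count [A1,A2,A3] i = (if i \<in> A1 then 1 else 0) + (if i \<in> A2 then 1 else 0) + (if i \<in> A3 then 1 else 0)"
  unfolding hold_count_def by simp

lemma rare_i: "exp3 k x (\<lambda>As. if hold_count As i = 1 then 1 else 0) = 3 * aa k x i * bb k x i ^ 2"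
proof -
  define h where "h A = (if i \<in> A then 1 else 0::real)" for A
  define n where "n A = (if i \<notin> A then 1 else 0::real)" for A
  have "exp3 k x (\<lambda>As. if hold_count As i = 1 then 1 else 0) =
    exp3 k x (\<lambda>As. (h (As!0) * n (As!1) * n (As!2) + n (As!0) * h (As!1) * n (As!2))
                 + n (As!0) * n (As!1) * h (As!2))"
  proof (rule exp3_cong)
    fix A1 A2 A3
    show "(if hold_count [A1,A2,A3] i = 1 then 1 else 0) = (h ([A1,A2,A3]!0) * n ([A1,A2,A3]!1) * n ([A1,A2,A3]!2) + n ([A1,A2,A3]!0) * h ([A1,A2,A3]!1) * n ([A1,A2,A3]!2))
                 + n ([A1,A2,A3]!0) * n ([A1,A2,A3]!1) * h ([A1,A2,A3]!2)"
      unfolding hc3 h_def n_def by (cases "i \<in> A1"; cases "i \<in> A2"; cases "i \<in> A3") simp_all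
  qed
  also have "\<dots> = 3 * aa k x i * bb k x i ^ 2"
    unfolding exp3_add exp3_sep[of k x h n n] exp3_sep[of k x n h n] exp3_sep[of k x n n h]
    unfolding aa_def bb_def h_def n_def by (simp add: power2_eq_square)
  finally show ?thesis .
qed


definition qq :: "nat \<Rightarrow> (nat set \<Rightarrow> nat) \<Rightarrow> real" where
  "qq k x = exp3 k x (\<lambda>As. if rare k As \<noteq> {} then 1 else 0)"

lemma r0_eq: "(\<Sum>i=1..k. dS_plus k x i) = qq k x"
proof -
  have "(\<Sum>i=1..k. dS_plus k x i) = exp3 k x (\<lambda>As. \<Sum>i=1..k. if i \<in> rare k As then 1 / real (card (rare k As)) else 0)"
    unfolding dS_plus_def by (rule exp3_sum[symmetric])
  also have "\<dots> = qq k x" unfolding qq_def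
  proof (rule exp3_cong)
    fix A1 A2 A3
    let ?R = "rare k [A1,A2,A3]"
    have sub: "?R \<subseteq> {1..k}" unfolding rare_def by auto
    have fin: "finite ?R" using sub finite_subset by blast
    have "(\<Sum>i=1..k. if i \<in> ?R then 1 / real (card ?R) else 0) = (\<Sum>i\<in>?R. 1 / real (card ?R))"
      using sub by (simp add: sum.If_cases Int_absorb1 Int_commute)
    also have "\<dots> = (if ?R \<noteq> {} then 1 else 0)" using fin by auto
    finally show "(\<Sum>i=1..k. if i \<in> ?R then 1 / real (card ?R) else 0) = (if ?R \<noteq> {} then 1 else 0)" .
  qed
  finally show ?thesis .
qed

lemma qq_bounds:
  assumes "\<forall>P. x P \<noteq> 0 \<longrightarrow> P \<in> nonseed_profiles k"
  shows "qq k x \<ge> 0" "qq k x \<le> 1"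
proof -
  show "qq k x \<ge> 0" unfolding qq_def by (rule exp3_nonneg) simp
  have "qq k x \<le> exp3 k x (\<lambda>As. 1)" unfolding qq_def by (rule exp3_mono) simp
  then show "qq k x \<le> 1" using exp3_one[OF assms] by simp
qed

lemma qq_le: "qq k x \<le> (\<Sum>i=1..k. 3 * aa k x i * bb k x i ^ 2)"
proof -
  have "qq k x \<le> exp3 k x (\<lambda>As. \<Sum>i=1..k. if hold_count As i = 1 then 1 else 0)"
    unfolding qq_def
  proof (rule exp3_mono)
    fix A1 A2 A3
    show "(if rare k [A1,A2,A3] \<noteq> {} then 1 else 0) \<le> (\<Sum>i=1..k. if hold_count [A1,A2,A3] i = 1 then 1 else (0::real))"
    proof (cases "rare k [A1,A2,A3] = {}")
      case True then show ?thesis by (simp add: sum_nonneg)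
    next
      case False
      then obtain j where j: "j \<in> {1..k}" "hold_count [A1,A2,A3] j = 1" unfolding rare_def by auto
      have "(1::real) \<le> (\<Sum>i=1..k. if hold_count [A1,A2,A3] i = 1 then 1 else (0::real))"
        using member_le_sum[of j "{1..k}" "\<lambda>i. if hold_count [A1,A2,A3] i = 1 then 1 else (0::real)"] j by simp
      then show ?thesis using False by simp
    qed
  qed
  also have "\<dots> = (\<Sum>i=1..k. exp3 k x (\<lambda>As. if hold_count As i = 1 then 1 else 0))"
    by (rule exp3_sum)
  also have "\<dots> = (\<Sum>i=1..k. 3 * aa k x i * bb k x i ^ 2)"
    by (intro sum.cong refl rare_i)
  finally show ?thesis .
qed

lemma ab_props:
  assumes "\<forall>P. x P \<noteq> 0 \<longrightarrow> P \<in> nonseed_profiles k"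
  shows "aa k x i + bb k x i = 1" "aa k x i \<ge> 0" "bb k x i \<ge> 0" "aa k x i \<le> 1" "bb k x i \<le> 1"
proof -
  have "aa k x i + bb k x i = (\<Sum>A\<in>profiles k. draw_prob k x A)" unfolding aa_def bb_def sum.distrib[symmetric]
    by (intro sum.cong) auto
  then show ab: "aa k x i + bb k x i = 1" using sum_p[OF assms] by simp
  show a0: "aa k x i \<ge> 0" unfolding aa_def by (intro sum_nonneg) (simp add: p_nonneg)
  show b0: "bb k x i \<ge> 0" unfolding bb_def by (intro sum_nonneg) (simp add: p_nonneg)
  show "aa k x i \<le> 1" using ab b0 by linarith
  show "bb k x i \<le> 1" using ab a0 by linarith
qed

lemma p_le1:
  assumes "\<forall>P. x P \<noteq> 0 \<longrightarrow> P \<in> nonseed_profiles k" "A \<in> profiles k"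
  shows "draw_prob k x A \<le> 1"
  using member_le_sum[of A "profiles k" "draw_prob k x"] fin_F p_nonneg sum_p[OF assms(1)] assms(2) by fastforce

lemma sum_delta_p: "T \<in> profiles k \<Longrightarrow> (\<Sum>A\<in>profiles k. draw_prob k x A * (if A = T then 1 else 0)) = draw_prob k x T"
  using fin_F[of k] by (simp add: if_distrib cong: if_cong)

lemma dT:
  assumes "k \<ge> 2" "i \<in> {1..k}"
  shows "download_prob k x ({1..k} - {i}) \<ge> aa k x i * draw_prob k x ({1..k} - {i}) ^ 2"
proof -
  let ?T = "{1..k} - {i}"
  have cardT: "card ?T = k - 1" using assms by simp
  have ne: "?T \<noteq> {}"
  proof -
    have "card ?T \<noteq> 0" using cardT assms by simp
    then show ?thesis by auto
  qed
  have Tin: "?T \<in> profiles k" unfolding profiles_def by auto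
  define h where "h A = (if i \<in> A then 1 else 0::real)" for A
  define e where "e A = (if A = ?T then 1 else 0::real)" for A
  have "download_prob k x ?T = exp3 k x (\<lambda>As.
         if (\<forall>m\<in>{1..k} - ?T. hold_count As m \<ge> 1) \<and> (\<forall>j\<in>?T. hold_count As j \<ge> 2)
         then 1 else 0)"
  proof -
    have nle: "\<not> k - Suc 0 \<le> k - 2" using assms(1) by arith
    show ?thesis unfolding download_prob_def using ne cardT nle by simp
  qed
  also have "\<dots> \<ge> exp3 k x (\<lambda>As. h (As!0) * e (As!1) * e (As!2))"
  proof (rule exp3_mono)
    fix A1 A2 A3
    show "h ([A1,A2,A3]!0) * e ([A1,A2,A3]!1) * e ([A1,A2,A3]!2) \<le> (if (\<forall>m\<in>{1..k} - ?T. hold_count [A1,A2,A3] m \<ge> 1) \<and> (\<forall>j\<in>?T. hold_count [A1,A2,A3] j \<ge> 2)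
         then 1 else 0)"
    proof (cases "i \<in> A1 \<and> A2 = ?T \<and> A3 = ?T")
      case True
      have c1: "\<forall>m\<in>{1..k} - ?T. hold_count [A1,A2,A3] m \<ge> 1"
        using True assms(2) by (auto simp: hc3)
      have c2: "\<forall>j\<in>?T. hold_count [A1,A2,A3] j \<ge> 2"
        using True by (auto simp: hc3)
      show ?thesis using c1 c2 True by (simp add: h_def e_def)
    next
      case False
      then have zero: "h ([A1,A2,A3]!0) * e ([A1,A2,A3]!1) * e ([A1,A2,A3]!2) = 0" by (auto simp: h_def e_def)
      show ?thesis unfolding zero by simp
    qed
  qed
  also have "exp3 k x (\<lambda>As. h (As!0) * e (As!1) * e (As!2)) = aa k x i * draw_prob k x ?T ^ 2"
    unfolding exp3_sep[of k x h e e] unfolding e_def sum_delta_p[OF Tin]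
    by (simp add: aa_def h_def power2_eq_square)
  finally show ?thesis .
qed

lemma dmid:
  assumes "i \<in> {1..k}" "i \<notin> A" "A \<noteq> {}" "card A \<le> k - 2"
  shows "download_prob k x A \<ge> aa k x i"
proof -
  have "download_prob k x A = (\<Sum>B\<in>profiles k. draw_prob k x B * (if B - A \<noteq> {} then 1 else 0))"
    unfolding download_prob_def using assms by simp
  also have "\<dots> \<ge> aa k x i" unfolding aa_def
    by (intro sum_mono mult_left_mono) (use assms(2) in \<open>auto simp: p_nonneg\<close>)
  finally show ?thesis .
qed



theorem lemma1:
  fixes k :: nat and x :: "nat set \<Rightarrow> nat" and arrival_rate :: real
  assumes "k \<ge> 2" and "arrival_rate > 0"
    and "\<forall>P. x P \<noteq> 0 \<longrightarrow> P \<in> nonseed_profiles k"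
  shows "total_rate k x \<ge>
           real (num_peers k x) * (\<Sum>i=1..k. dS_plus k x i)^2 / (6 * real k ^ 2)"
proof -
  note k2 = assms(1) and supp = assms(3)
  define F where "F = profiles k"
  define p where "p = draw_prob k x"
  define d where "d = download_prob k x"
  define q where "q = qq k x"
  define a where "a = aa k x"
  define b where "b = bb k x"
  define T where "T i = {1..k} - {i}" for i :: nat
  define t where "t i = p (T i)" for i
  define z where "z = p {}"
  define Mid where "Mid = {A\<in>F. A \<noteq> {} \<and> card A \<le> k - 2}"
  define TT where "TT = {A\<in>F. card A = k - 1}"
  define LM where "LM = (\<Sum>A\<in>Mid. p A * d A)"
  define LT where "LT = (\<Sum>A\<in>TT. p A * d A)"
  define G where "G i = {A\<in>F. i \<notin> A} - {{}, T i}" for i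
  define m where "m i = (\<Sum>A\<in>G i. p A)" for i
  define W where "W = (\<Sum>i=1..k. a i * t i ^ 2)"
  have finF: "finite F" unfolding F_def by (rule fin_F)
  have p0: "\<And>A. p A \<ge> 0" unfolding p_def by (rule p_nonneg)
  have d0: "\<And>A. d A \<ge> 0" unfolding d_def by (rule d_nonneg)
  have a0: "\<And>i. a i \<ge> 0" and a1: "\<And>i. a i \<le> 1" and b1: "\<And>i. b i \<le> 1"
    unfolding a_def b_def using ab_props[OF supp] by auto
  have t0: "\<And>i. t i \<ge> 0" unfolding t_def using p0 by simp
  have TF: "\<And>i. T i \<in> F" unfolding T_def F_def profiles_def by auto
  have t1: "\<And>i. t i \<le> 1" unfolding t_def p_def using p_le1[OF supp] TF unfolding F_def by blast
  have z0: "z \<ge> 0" unfolding z_def using p0 by simp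
  have m0: "\<And>i. m i \<ge> 0" unfolding m_def using p0 by (simp add: sum_nonneg)
  have LM0: "LM \<ge> 0" unfolding LM_def using p0 d0 by (simp add: sum_nonneg)
  have LT0: "LT \<ge> 0" unfolding LT_def using p0 d0 by (simp add: sum_nonneg)
  have q0: "q \<ge> 0" and q1: "q \<le> 1" unfolding q_def using qq_bounds[OF supp] by auto
  have Tne: "T i \<noteq> {}" if "i \<in> {1..k}" for i
  proof -
    have "card (T i) = k - 1" unfolding T_def using that by simp
    then show ?thesis using k2 by auto
  qed
  have cardT: "card (T i) = k - 1" if "i \<in> {1..k}" for i unfolding T_def using that by simp
  have b_dec: "b i = z + t i + m i" if i: "i \<in> {1..k}" for i
  proof -
    have "b i = (\<Sum>A\<in>F. if i \<notin> A then p A else 0)"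
      unfolding b_def bb_def F_def p_def by (intro sum.cong refl) simp
    also have "\<dots> = (\<Sum>A\<in>{A\<in>F. i \<notin> A}. p A)" using finF by (simp add: sum.inter_filter)
    also have "\<dots> = p {} + (\<Sum>A\<in>{A\<in>F. i \<notin> A} - {{}}. p A)"
      using finF by (intro sum.remove) (auto simp: F_def profiles_def)
    also have "(\<Sum>A\<in>{A\<in>F. i \<notin> A} - {{}}. p A) = p (T i) + (\<Sum>A\<in>{A\<in>F. i \<notin> A} - {{}} - {T i}. p A)"
      using finF Tne[OF i] TF[of i] by (intro sum.remove) (auto simp: T_def)
    also have "{A\<in>F. i \<notin> A} - {{}} - {T i} = G i" unfolding G_def by auto
    finally show ?thesis unfolding z_def t_def m_def by simp
  qed
  have finMid: "finite Mid" unfolding Mid_def using finF by simp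
  have finTT: "finite TT" unfolding TT_def using finF by simp
  have am: "a i * m i \<le> LM" if i: "i \<in> {1..k}" for i
  proof -
    have "a i * m i = (\<Sum>A\<in>G i. p A * a i)" unfolding m_def by (simp add: sum_distrib_left mult.commute)
    also have "\<dots> \<le> (\<Sum>A\<in>G i. p A * d A)"
    proof (intro sum_mono mult_left_mono p0)
      fix A assume A: "A \<in> G i"
      then have AF: "A \<subseteq> {1..k}" and iA: "i \<notin> A" and Ane: "A \<noteq> {}" and AT: "A \<noteq> T i"
        unfolding G_def F_def profiles_def by auto
      have "A \<subset> T i" using AF iA AT unfolding T_def by auto
      then have "card A < card (T i)" by (intro psubset_card_mono) (auto simp: T_def)
      then have "card A \<le> k - 2" using cardT[OF i] by linarith
      then show "a i \<le> d A" unfolding a_def d_def using dmid[OF i iA Ane] by simp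
    qed
    also have "\<dots> \<le> LM" unfolding LM_def
    proof (rule sum_mono2[OF finMid])
      show "G i \<subseteq> Mid"
      proof
        fix A assume A: "A \<in> G i"
        then have AF: "A \<subseteq> {1..k}" and iA: "i \<notin> A" and Ane: "A \<noteq> {}" and AT: "A \<noteq> T i"
          unfolding G_def F_def profiles_def by auto
        have "A \<subset> T i" using AF iA AT unfolding T_def by auto
        then have "card A < card (T i)" by (intro psubset_card_mono) (auto simp: T_def)
        then have "card A \<le> k - 2" using cardT[OF i] by linarith
        then show "A \<in> Mid" using A Ane unfolding Mid_def G_def by auto
      qed
    qed (use p0 d0 in auto)
    finally show ?thesis .
  qed
  have injT: "inj_on T {1..k}"
  proof (rule inj_onI)
    fix i j assume "i \<in> {1..k}" "j \<in> {1..k}" "T i = T j"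
    then show "i = j" unfolding T_def by blast
  qed
  have LT_ge: "(\<Sum>i=1..k. a i * t i ^ 3) \<le> LT"
  proof -
    have "(\<Sum>i=1..k. a i * t i ^ 3) \<le> (\<Sum>i=1..k. t i * d (T i))"
    proof (rule sum_mono)
      fix i assume i: "i \<in> {1..k}"
      have "a i * t i ^ 2 \<le> d (T i)" unfolding a_def t_def p_def d_def T_def using dT[OF k2 i] by simp
      then have "t i * (a i * t i ^ 2) \<le> t i * d (T i)" using t0 by (rule mult_left_mono)
      then show "a i * t i ^ 3 \<le> t i * d (T i)" by (simp add: power2_eq_square power3_eq_cube mult_ac)
    qed
    also have "\<dots> = (\<Sum>A\<in>T ` {1..k}. p A * d A)"
      using sum.reindex[OF injT, of "\<lambda>A. p A * d A"] unfolding t_def by simp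
    also have "\<dots> \<le> LT" unfolding LT_def
      by (rule sum_mono2[OF finTT]) (use cardT TF p0 d0 in \<open>auto simp: TT_def\<close>)
    finally show ?thesis .
  qed
  have W2: "W^2 \<le> real k * LT"
  proof -
    have "W^2 \<le> real (card {1..k}) * (\<Sum>i=1..k. (a i * t i ^ 2)^2)" unfolding W_def by (rule cs_card)
    also have "\<dots> \<le> real k * (\<Sum>i=1..k. a i * t i ^ 3)"
    proof -
      have "(\<Sum>i=1..k. (a i * t i ^ 2)^2) \<le> (\<Sum>i=1..k. a i * t i ^ 3)"
      proof (rule sum_mono)
        fix i
        have at1: "a i * t i \<le> 1" using a0 a1 t0 t1 by (simp add: mult_le_one)
        have "(a i * t i ^ 2)^2 = (a i * t i ^ 3) * (a i * t i)"
          by (simp add: power2_eq_square power3_eq_cube mult_ac)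
        also have "\<dots> \<le> a i * t i ^ 3" using at1 a0 t0 by (intro mult_left_le) auto
        finally show "(a i * t i ^ 2)^2 \<le> a i * t i ^ 3" .
      qed
      then show ?thesis by (simp add: mult_left_mono)
    qed
    also have "\<dots> \<le> real k * LT" using LT_ge by (simp add: mult_left_mono)
    finally show ?thesis .
  qed
  have qb: "q \<le> 6 * real k * z + 6 * real k * LM + 3 * W"
  proof -
    have "q \<le> (\<Sum>i=1..k. 3 * a i * b i ^ 2)" unfolding q_def a_def b_def by (rule qq_le)
    also have "\<dots> \<le> (\<Sum>i=1..k. 6 * (a i * z) + 6 * (a i * m i) + 3 * (a i * t i ^ 2))"
    proof (rule sum_mono)
      fix i assume i: "i \<in> {1..k}"
      have bd: "b i = z + t i + m i" by (rule b_dec[OF i])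
      have "b i ^ 2 = (z + m i) * (b i + t i) + t i ^ 2" unfolding bd by (simp add: power2_eq_square algebra_simps)
      also have "(z + m i) * (b i + t i) \<le> (z + m i) * 2"
        using b1[of i] t1[of i] z0 m0[of i] by (intro mult_left_mono) auto
      finally have "b i ^ 2 \<le> 2 * (z + m i) + t i ^ 2" by simp
      then have "a i * b i ^ 2 \<le> a i * (2 * (z + m i) + t i ^ 2)" using a0 by (rule mult_left_mono)
      then show "3 * a i * b i ^ 2 \<le> 6 * (a i * z) + 6 * (a i * m i) + 3 * (a i * t i ^ 2)"
        by (simp add: algebra_simps)
    qed
    also have "\<dots> = 6 * (\<Sum>i=1..k. a i * z) + 6 * (\<Sum>i=1..k. a i * m i) + 3 * W"
      unfolding W_def by (simp add: sum.distrib sum_distrib_left)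
    also have "(\<Sum>i=1..k. a i * z) \<le> (\<Sum>i=1..k. z)"
    proof (rule sum_mono)
      fix i show "a i * z \<le> z" using mult_right_mono[OF a1[of i] z0] by simp
    qed
    also have "(\<Sum>i=1..k. a i * m i) \<le> (\<Sum>i=1..k. LM)"
      by (rule sum_mono) (rule am)
    finally show ?thesis by (simp add: mult.assoc)
  qed
  define NS where "NS = nonseed_profiles k"
  have finNS: "finite NS" unfolding NS_def nonseed_profiles_def by simp
  have dq: "d {} = q" unfolding d_def q_def download_prob_def qq_def by simp
  have Lge: "z * q + LM + LT \<le> (\<Sum>A\<in>NS. p A * d A)"
  proof -
    have disj1: "{{}} \<inter> Mid = {}" unfolding Mid_def by auto
    have disj2: "({{}} \<union> Mid) \<inter> TT = {}" unfolding Mid_def TT_def using k2 by auto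
    have "(\<Sum>A\<in>{{}} \<union> Mid \<union> TT. p A * d A) = z * q + LM + LT"
      using finMid finTT disj1 disj2
      by (simp add: sum.union_disjoint LM_def LT_def z_def dq)
    moreover have "(\<Sum>A\<in>{{}} \<union> Mid \<union> TT. p A * d A) \<le> (\<Sum>A\<in>NS. p A * d A)"
    proof (rule sum_mono2[OF finNS])
      show "{{}} \<union> Mid \<union> TT \<subseteq> NS"
      proof
        fix A assume A: "A \<in> {{}} \<union> Mid \<union> TT"
        have Ak: "A \<noteq> {1..k}"
        proof
          assume eq: "A = {1..k}"
          then have "card A = k" by simp
          then show False using A k2 unfolding Mid_def TT_def by auto
        qed
        have "A \<in> F" using A unfolding Mid_def TT_def F_def profiles_def by auto
        then show "A \<in> NS" using Ak unfolding NS_def nonseed_profiles_def F_def profiles_def by auto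
      qed
    qed (use p0 d0 in auto)
    ultimately show ?thesis by simp
  qed
  define S where "S = real (num_peers k x)"
  have S0: "S > 0" unfolding S_def using S_pos by simp
  have tr: "total_rate k x = S * (\<Sum>A\<in>NS. p A * d A)"
  proof -
    have "total_rate k x = (\<Sum>A\<in>NS. S * (p A * d A))"
      unfolding total_rate_def NS_def
    proof (intro sum.cong refl)
      fix A assume "A \<in> nonseed_profiles k"
      then have "A \<noteq> {1..k}" unfolding nonseed_profiles_def by auto
      then show "real (x A) * download_prob k x A = S * (p A * d A)"
        unfolding p_def d_def draw_prob_def S_def using S0 S_def by simp
    qed
    then show ?thesis by (simp add: sum_distrib_left)
  qed
  have fin: "q^2 / (6 * (real k)^2) \<le> z*q + LM + LT"
    by (rule final_arith) (use k2 q0 q1 z0 LM0 LT0 W2 qb in auto)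
  have "S * (q^2 / (6 * (real k)^2)) \<le> S * (\<Sum>A\<in>NS. p A * d A)"
    using fin Lge S0 by (intro mult_left_mono) auto
  then show ?thesis unfolding tr r0_eq q_def[symmetric] S_def by simp
qed

end
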